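(* Let $P_1,\dots,P_n\subset\mathbb R^n$ be polytopes. The following are equivalent: (1) the Cayley polytope $\mathcal C(P_1,\dots,P_n)$ is a fully mixed $(2n-1)$-dimensional simplex; (2) $P_1,\dots,P_n$ are segments with linearly independent directions.
   Context: The Cayley polytope $\mathcal C(P_1,\dots,P_n)$ is the convex hull in $\mathbb R^n\times\mathbb R^n$ of $\bigcup_{i=1}^nP_i\times\{e_i\}$, with $e_1,\dots,e_n$ the standard basis of the second factor $\mathbb R^n$; it is called fully mixed if $\dim P_i\ge1$ for all $i$. A segment is a polytope of dimension exactly 1. *)

theory Defs
  imports "HOL-Analysis.Analysis"
begin

text \<open>Cayley polytope of P_i (i ranging over the index type 'n, so n = CARD('n)),
  living in R^n x R^n, with e_i = axis i 1.\<close>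
definition cayley :: "('n::finite \<Rightarrow> (real^'n) set) \<Rightarrow> ((real^'n) \<times> (real^'n)) set" where
  "cayley P = convex hull (\<Union>i. (\<lambda>x. (x, axis i 1)) ` P i)"

definition fully_mixed :: "('n::finite \<Rightarrow> (real^'n) set) \<Rightarrow> bool" where
  "fully_mixed P \<longleftrightarrow> (\<forall>i. aff_dim (P i) \<ge> 1)"

definition is_segment :: "'a::euclidean_space set \<Rightarrow> bool" where
  "is_segment S \<longleftrightarrow> polytope S \<and> aff_dim S = 1"

end

theory Submission
  imports Defs
begin

lemma axis1_eq_iff: "(axis i (1::real) :: real^'n::finite) = axis j (1::real) \<longleftrightarrow> i = j"
  by (simp add: axis_eq_axis)

lemma sum_axis_comp: "((\<Sum>i\<in>UNIV. x i *\<^sub>R (axis i (1::real) :: real^'n::finite)) $ j) = x j"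
  by (simp add: sum_component axis_def if_distrib cong: if_cong)

lemma lin_indep_iff:
  fixes d :: "'n::finite \<Rightarrow> 'a::real_vector"
  shows "(inj d \<and> independent (range d)) \<longleftrightarrow> (\<forall>c. (\<Sum>i\<in>UNIV. c i *\<^sub>R d i) = 0 \<longrightarrow> (\<forall>i. c i = 0))"
proof
  assume H: "inj d \<and> independent (range d)"
  show "\<forall>c. (\<Sum>i\<in>UNIV. c i *\<^sub>R d i) = 0 \<longrightarrow> (\<forall>i. c i = 0)"
  proof (intro allI impI)
    fix c i assume s: "(\<Sum>i\<in>UNIV. c i *\<^sub>R d i) = 0"
    define u where "u v = c (inv d v)" for v
    have "(\<Sum>v\<in>range d. u v *\<^sub>R v) = (\<Sum>i\<in>UNIV. u (d i) *\<^sub>R d i)"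
      using H by (simp add: sum.reindex)
    also have "\<dots> = 0" using H s by (simp add: u_def)
    finally have "(\<Sum>v\<in>range d. u v *\<^sub>R v) = 0" .
    moreover have "finite (range d)" by simp
    ultimately have "\<forall>v\<in>range d. u v = 0"
    proof -
      assume a1: "(\<Sum>v\<in>range d. u v *\<^sub>R v) = 0" and a2: "finite (range d)"
      have nd: "\<not> dependent (range d)" using H by blast
      show ?thesis
      proof (rule ccontr)
        assume "\<not> (\<forall>v\<in>range d. u v = 0)"
        then have "\<exists>v\<in>range d. u v \<noteq> 0" by blast
        then have "dependent (range d)" using a1 dependent_finite[OF a2] by blast
        then show False using nd by blast
      qed
    qed
    then show "c i = 0" using H by (simp add: u_def)
  qed
next
  assume H: "\<forall>c. (\<Sum>i\<in>UNIV. c i *\<^sub>R d i) = 0 \<longrightarrow> (\<forall>i. c i = 0)"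
  have inj: "inj d"
  proof (rule injI, rule ccontr)
    fix i j assume e: "d i = d j" "i \<noteq> j"
    define c where "c k = (if k = i then 1 else if k = j then -1 else (0::real))" for k
    have "(\<Sum>k\<in>UNIV. c k *\<^sub>R d k) = (\<Sum>k\<in>{i,j}. c k *\<^sub>R d k)"
      by (rule sum.mono_neutral_right) (auto simp: c_def)
    also have "\<dots> = 0" using e by (simp add: c_def)
    finally have "c i = 0" using H by blast
    then show False by (simp add: c_def)
  qed
  moreover have "independent (range d)"
  proof
    assume "dependent (range d)"
    then obtain u where u: "\<exists>v\<in>range d. u v \<noteq> 0" "(\<Sum>v\<in>range d. u v *\<^sub>R v) = 0"
      using dependent_finite[of "range d"] by auto
    have "(\<Sum>i\<in>UNIV. u (d i) *\<^sub>R d i) = 0" using u inj by (simp add: sum.reindex)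
    then show False using H u by auto
  qed
  ultimately show "inj d \<and> independent (range d)" by blast
qed

locale cay2 =
  fixes a d :: "'n::finite \<Rightarrow> real^'n"
  assumes dnz: "\<forall>i. d i \<noteq> 0"
begin
definition "f i = (a i, axis i (1::real))"
definition "g i = (a i + d i, axis i (1::real))"

lemma inj_f: "inj f" by (rule injI) (simp add: f_def axis1_eq_iff)
lemma inj_g: "inj g" by (rule injI) (simp add: g_def axis1_eq_iff)
lemma disj: "range f \<inter> range g = {}"
  using dnz by (auto simp: f_def g_def axis1_eq_iff)
lemma fin: "finite (range f \<union> range g)" by simp
lemma card_C: "card (range f \<union> range g) = 2 * CARD('n)"
  using disj inj_f inj_g by (simp add: card_Un_disjoint card_image)
lemma sum_C: "sum F (range f \<union> range g) = (\<Sum>i\<in>UNIV. F (f i)) + (\<Sum>i\<in>UNIV. F (g i))"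
  using disj inj_f inj_g by (simp add: sum.union_disjoint sum.reindex)

lemma dep_if: assumes "(\<Sum>i\<in>UNIV. c i *\<^sub>R d i) = 0" "c k \<noteq> 0"
  shows "affine_dependent (range f \<union> range g)"
proof -
  define idx where "idx p = (SOME i. snd p = axis i (1::real))" for p :: "(real^'n) \<times> (real^'n)"
  have idf: "idx (x, axis i (1::real)) = i" for i x
    by (simp_all add: idx_def axis1_eq_iff)
  define w where "w p = (if fst p = a (idx p) then - c (idx p) else c (idx p))" for p
  have wf: "w (f i) = - c i" for i by (simp add: w_def idf f_def)
  have wg: "w (g i) = c i" for i using dnz by (simp add: w_def idf g_def)
  have s1: "sum w (range f \<union> range g) = 0" by (simp add: sum_C wf wg sum_negf)
  have "(\<Sum>p\<in>range f \<union> range g. w p *\<^sub>R p) = (\<Sum>i\<in>UNIV. (- c i) *\<^sub>R f i + c i *\<^sub>R g i)"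
    by (simp add: sum_C wf wg sum.distrib sum_negf sum_subtractf)
  also have "\<dots> = (\<Sum>i\<in>UNIV. (c i *\<^sub>R d i, 0))"
    by (rule sum.cong) (auto simp: f_def g_def algebra_simps)
  also have "\<dots> = 0" using assms(1) by (simp add: prod_eq_iff fst_sum snd_sum)
  finally have s2: "(\<Sum>p\<in>range f \<union> range g. w p *\<^sub>R p) = 0" .
  have s3: "\<exists>v\<in>range f \<union> range g. w v \<noteq> 0" 
  proof
    show "g k \<in> range f \<union> range g" by blast
    show "w (g k) \<noteq> 0" using assms(2) wg by simp
  qed
  show ?thesis using affine_dependent_explicit_finite[OF fin] s1 s2 s3 by blast
qed

lemma dep_only_if: assumes "affine_dependent (range f \<union> range g)"
  shows "\<exists>c. (\<Sum>i\<in>UNIV. c i *\<^sub>R d i) = 0 \<and> (\<exists>k. c k \<noteq> 0)"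
proof -
  obtain U where U: "sum U (range f \<union> range g) = 0" "\<exists>v\<in>range f \<union> range g. U v \<noteq> 0"
     "(\<Sum>v\<in>range f \<union> range g. U v *\<^sub>R v) = 0"
    using assms affine_dependent_explicit_finite[OF fin] by blast
  define lam where "lam i = U (f i)" for i
  define mu where "mu i = U (g i)" for i
  have E: "(\<Sum>i\<in>UNIV. lam i *\<^sub>R f i) + (\<Sum>i\<in>UNIV. mu i *\<^sub>R g i) = 0"
    using U(3) by (simp add: sum_C lam_def mu_def)
  have "snd ((\<Sum>i\<in>UNIV. lam i *\<^sub>R f i) + (\<Sum>i\<in>UNIV. mu i *\<^sub>R g i)) = 
      (\<Sum>i\<in>UNIV. (lam i + mu i) *\<^sub>R axis i (1::real))"
    by (simp add: snd_sum f_def g_def sum.distrib[symmetric] scaleR_add_left)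
  then have E2: "(\<Sum>i\<in>UNIV. (lam i + mu i) *\<^sub>R (axis i (1::real) :: real^'n)) = 0"
    using E by simp
  have lm: "lam i + mu i = 0" for i
    using arg_cong[OF E2, of "\<lambda>v. v $ i"] by (simp only: sum_axis_comp) simp
  have "fst ((\<Sum>i\<in>UNIV. lam i *\<^sub>R f i) + (\<Sum>i\<in>UNIV. mu i *\<^sub>R g i)) = 
      (\<Sum>i\<in>UNIV. (lam i + mu i) *\<^sub>R a i) + (\<Sum>i\<in>UNIV. mu i *\<^sub>R d i)"
    by (simp add: fst_sum f_def g_def sum.distrib[symmetric] algebra_simps)
  then have E3: "(\<Sum>i\<in>UNIV. mu i *\<^sub>R d i) = 0" using E lm by simp
  have "\<exists>k. mu k \<noteq> 0"
  proof (rule ccontr)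
    assume "\<not> (\<exists>k. mu k \<noteq> 0)"
    then have "mu i = 0" "lam i = 0" for i using lm by auto
    then show False using U(2) by (auto simp: lam_def mu_def)
  qed
  then show ?thesis using E3 by blast
qed
end

lemma image_pair_Times: "(\<lambda>x. (x, c)) ` S = S \<times> {c}" by auto

theorem lemma2p4:
  fixes P :: "'n::finite \<Rightarrow> (real^'n) set"
  assumes "\<forall>i. polytope (P i)"
  shows "(fully_mixed P \<and> (2 * int CARD('n) - 1) simplex (cayley P)) \<longleftrightarrow>
         ((\<forall>i. is_segment (P i)) \<and>
          (\<exists>a d. (\<forall>i. P i = closed_segment (a i) (a i + d i)) \<and>
                 inj d \<and> independent (range d)))"
proof -
  define Q where "Q = (\<Union>i. P i \<times> {axis i (1::real) :: real^'n})"
  have cay: "cayley P = convex hull Q"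
    by (simp add: cayley_def Q_def image_pair_Times)
  have polyP: "polytope (P i)" for i using assms by blast
  show ?thesis
  proof
    assume L: "fully_mixed P \<and> (2 * int CARD('n) - 1) simplex (cayley P)"
    show "(\<forall>i. is_segment (P i)) \<and>
          (\<exists>a d. (\<forall>i. P i = closed_segment (a i) (a i + d i)) \<and>
                 inj d \<and> independent (range d))"
proof -
      have fm: "\<And>i. aff_dim (P i) \<ge> 1" using L by (simp add: fully_mixed_def)
      obtain C where nd: "\<not> affine_dependent C" and cardC0: "int (card C) = 2 * int CARD('n) - 1 + 1"
        and cayC: "cayley P = convex hull C"
        using L unfolding simplex_def by blast
      have cardC: "card C = 2 * CARD('n)" using cardC0 by simp
      have finC: "finite C" proof (rule ccontr)
        assume "infinite C"
        then have "card C = 0" by simp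
        then show False using cardC by simp
      qed
      have KC: "convex hull Q = convex hull C" using cay cayC by simp
      have compQ: "compact Q" unfolding Q_def
        by (rule compact_UN) (simp_all add: compact_Times polytope_imp_compact polyP)
      have convP: "convex (P i)" for i by (simp add: polytope_imp_convex polyP)
      have inner_Q: "(0, axis i (1::real)) \<bullet> z = (if j = i then 1 else 0)" if "z \<in> P j \<times> {axis j (1::real)}" for i j z
        using that by (auto simp: inner_axis_axis)
      have ext: "(x, axis i (1::real)) \<in> C" if "x extreme_point_of P i" for x i
      proof -
        define v where "v = ((0::real^'n), axis i (1::real) :: real^'n)"
        define F where "F = convex hull Q \<inter> {z. v \<bullet> z = 1}"
        have le: "v \<bullet> z \<le> 1" if "z \<in> convex hull Q" for z
        proof -
          have "Q \<subseteq> {z. v \<bullet> z \<le> 1}"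
            unfolding Q_def v_def using inner_Q by fastforce
          then have "convex hull Q \<subseteq> {z. v \<bullet> z \<le> 1}"
            by (simp add: hull_minimal convex_halfspace_le)
          then show ?thesis using that by blast
        qed
        have Ff: "F face_of convex hull Q"
          unfolding F_def by (rule face_of_Int_supporting_hyperplane_le) (auto simp: le)
        have FP: "F = P i \<times> {axis i (1::real)}"
        proof
          show "P i \<times> {axis i (1::real)} \<subseteq> F"
            unfolding F_def
          proof
            fix z assume z: "z \<in> P i \<times> {axis i (1::real)}"
            then have "z \<in> Q" unfolding Q_def by blast
            then have "z \<in> convex hull Q" by (rule hull_inc)
            moreover have "v \<bullet> z = 1" using inner_Q[OF z] by (simp add: v_def)
            ultimately show "z \<in> convex hull Q \<inter> {z. v \<bullet> z = 1}" by blast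
          qed
          obtain S' where S': "S' \<subseteq> Q" "F = convex hull S'"
            using face_of_convex_hull_subset[OF compQ Ff] by blast
          have "S' \<subseteq> P i \<times> {axis i (1::real)}"
          proof
            fix z assume z: "z \<in> S'"
            then have "z \<in> convex hull S'" by (rule hull_inc)
            then have "z \<in> F" using S'(2) by simp
            then have vz: "v \<bullet> z = 1" by (simp add: F_def)
            have "z \<in> Q" using z S'(1) by blast
            then obtain j where j: "z \<in> P j \<times> {axis j (1::real)}" unfolding Q_def by blast
            then have "j = i" using inner_Q[OF j, of i] vz by (simp add: v_def split: if_splits)
            then show "z \<in> P i \<times> {axis i (1::real)}" using j by simp
          qed
          then show "F \<subseteq> P i \<times> {axis i (1::real)}"
            unfolding S'(2) by (simp add: hull_minimal convex_Times convP)
        qed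
        have "{x} face_of P i" using that face_of_singleton by blast
        then have "{x} \<times> {axis i (1::real)} face_of P i \<times> {axis i (1::real) :: real^'n}"
          using face_of_Times_eq[of "{x}" "{axis i (1::real) :: real^'n}" "P i" "{axis i (1::real) :: real^'n}"]
            face_of_refl[of "{axis i (1::real) :: real^'n}"] by simp
        then have "{(x, axis i (1::real))} face_of F" using FP by simp
        then have "{(x, axis i (1::real))} face_of convex hull Q" using Ff face_of_trans by blast
        then have "{(x, axis i (1::real))} face_of convex hull C" using KC by simp
        then have "(x, axis i (1::real)) extreme_point_of convex hull C" by (simp add: face_of_singleton)
        then show ?thesis using extreme_point_of_convex_hull_affine_independent[OF nd] by blast
      qed
      have CQ: "C \<subseteq> Q"
      proof
        fix p assume "p \<in> C"
        then have "p extreme_point_of convex hull C"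
          using extreme_point_of_convex_hull_affine_independent[OF nd] by blast
        then have "p extreme_point_of convex hull Q" using KC by simp
        then show "p \<in> Q" by (rule extreme_point_of_convex_hull)
      qed
      define E where "E i = {x. (x, axis i (1::real)) \<in> C}" for i
      have finE: "finite (E i)" for i
        by (rule finite_subset[of _ "fst ` C"]) (auto simp: E_def finC image_iff, metis fst_conv)
      have CE: "C = (\<Union>i. E i \<times> {axis i (1::real)})"
        using CQ by (auto simp: E_def Q_def)
      have "card C = (\<Sum>i\<in>UNIV. card (E i \<times> {axis i (1::real) :: real^'n}))"
        unfolding CE by (rule card_UN_disjoint) (auto simp: finE axis1_eq_iff)
      then have sumE: "(\<Sum>i\<in>UNIV. card (E i)) = 2 * CARD('n)"
        using cardC by (simp add: card_cartesian_product)
      define X where "X i = {x. x extreme_point_of P i}" for i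
      have XE: "X i \<subseteq> E i" for i using ext by (auto simp: X_def E_def)
      have finX: "finite (X i)" for i using finite_subset[OF XE finE] .
      have PX: "P i = convex hull X i" for i
        unfolding X_def by (rule Krein_Milman_Minkowski) (simp_all add: polytope_imp_compact polyP convP)
      have cX: "card (X i) \<ge> 2" for i
      proof (rule ccontr)
        assume "\<not> card (X i) \<ge> 2"
        then have "card (X i) \<le> Suc 0" by simp
        then have "\<forall>a\<in>X i. \<forall>b\<in>X i. a = b" using card_le_Suc0_iff_eq[OF finX] by blast
        then have "X i = {} \<or> (\<exists>x. X i = {x})" by blast
        then have "aff_dim (P i) \<le> 0"
          by (auto simp: PX aff_dim_convex_hull)
        then show False using fm[of i] by simp
      qed
      have cE: "card (E i) = 2" for i
      proof (rule ccontr)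
        assume ne: "card (E i) \<noteq> 2"
        have ge: "card (E j) \<ge> 2" for j using cX[of j] card_mono[OF finE XE, of j] by simp
        have "(\<Sum>j::'n\<in>UNIV. (2::nat)) < (\<Sum>j\<in>UNIV. card (E j))"
        proof (rule sum_strict_mono_ex1[of UNIV "\<lambda>j. 2" "\<lambda>j. card (E j)"])
          show "\<forall>x\<in>UNIV. 2 \<le> card (E x)" using ge by blast
          show "\<exists>a\<in>UNIV. 2 < card (E a)" proof
            show "2 < card (E i)" using ge[of i] ne by linarith
          qed simp
        qed simp
        then show False using sumE by simp
      qed
      have XE2: "X i = E i" for i
      proof (rule card_subset_eq[OF finE XE])
        show "card (X i) = card (E i)" using cX[of i] card_mono[OF finE XE, of i] cE[of i] by linarith
      qed
      have "\<forall>i. \<exists>p. X i = {fst p, snd p} \<and> fst p \<noteq> snd p"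
      proof
        fix i
        have "card (X i) = 2" using cE[of i] XE2[of i] by simp
        then obtain x y where "X i = {x, y}" "x \<noteq> y" by (auto simp: card_2_iff)
        then show "\<exists>p. X i = {fst p, snd p} \<and> fst p \<noteq> snd p" by (intro exI[of _ "(x,y)"]) simp
      qed
      then obtain p where pp: "\<forall>i. X i = {fst (p i), snd (p i)} \<and> fst (p i) \<noteq> snd (p i)"
        by (rule choice[THEN exE]) blast
      define b where "b i = fst (p i)" for i
      define c where "c i = snd (p i)" for i
      have bc: "\<And>i. X i = {b i, c i}" "\<And>i. b i \<noteq> c i" using pp by (auto simp: b_def c_def)
      define d where "d i = c i - b i" for i
      have dnz: "\<forall>i. d i \<noteq> 0" using bc(2) by (metis d_def eq_iff_diff_eq_0)
      have Pd: "P i = closed_segment (b i) (b i + d i)" for i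
        by (simp add: d_def PX bc segment_convex_hull)
      interpret cay2 b d using dnz by unfold_locales
      have Cfg: "C = range f \<union> range g"
        unfolding CE XE2[symmetric] bc by (auto simp: f_def g_def d_def)
      have cprop: "\<forall>c. (\<Sum>i\<in>UNIV. c i *\<^sub>R d i) = 0 \<longrightarrow> (\<forall>i. c i = 0)"
        using dep_if nd Cfg by blast
      have seg: "\<forall>i. is_segment (P i)"
        unfolding is_segment_def using polyP dnz
        by (simp add: Pd segment_convex_hull aff_dim_convex_hull)
      show ?thesis using seg Pd cprop lin_indep_iff by blast
    qed
  next
    assume R: "(\<forall>i. is_segment (P i)) \<and>
          (\<exists>a d. (\<forall>i. P i = closed_segment (a i) (a i + d i)) \<and>
                 inj d \<and> independent (range d))"
    then obtain a d where Pd: "\<And>i. P i = closed_segment (a i) (a i + d i)"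
      and id: "inj d" "independent (range d)" by blast
    have cprop: "\<forall>c. (\<Sum>i\<in>UNIV. c i *\<^sub>R d i) = 0 \<longrightarrow> (\<forall>i. c i = 0)"
      using id lin_indep_iff by blast
    have dnz: "\<forall>i. d i \<noteq> 0"
    proof
      fix i
      show "d i \<noteq> 0"
      proof
        assume d0: "d i = 0"
        have "(\<Sum>j\<in>UNIV. (if j = i then 1 else 0) *\<^sub>R d j) = (\<Sum>j\<in>{i}. (if j = i then 1 else 0) *\<^sub>R d j)"
          by (rule sum.mono_neutral_right) auto
        also have "\<dots> = 0" using d0 by simp
        finally have "(\<Sum>j\<in>UNIV. (if j = i then 1 else 0) *\<^sub>R d j) = 0" .
        then have "(\<lambda>j. if j = i then 1 else (0::real)) i = 0"
          using cprop[rule_format, of "\<lambda>j. if j = i then 1 else (0::real)"] by blast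
        then show False by simp
      qed
    qed
    interpret cay2 a d using dnz by unfold_locales
    have fm: "fully_mixed P"
      unfolding fully_mixed_def
    proof
      fix i
      have "aff_dim (P i) = aff_dim {a i, a i + d i}"
        by (simp add: Pd segment_convex_hull aff_dim_convex_hull)
      also have "\<dots> = 1" using dnz by simp
      finally show "aff_dim (P i) \<ge> 1" by simp
    qed
    have nd: "\<not> affine_dependent (range f \<union> range g)"
      using dep_only_if cprop by blast
    have CQ: "range f \<union> range g \<subseteq> Q"
      by (auto simp: Q_def f_def g_def Pd)
    have QC: "Q \<subseteq> convex hull (range f \<union> range g)"
    proof -
      have "P i \<times> {axis i (1::real)} \<subseteq> convex hull (range f \<union> range g)" for i
      proof -
        have "P i \<times> {axis i (1::real)} = convex hull ({a i, a i + d i} \<times> {axis i (1::real)})"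
        proof -
          have "P i \<times> {axis i (1::real)} = (convex hull {a i, a i + d i}) \<times> (convex hull {axis i (1::real)})"
            by (simp add: Pd segment_convex_hull)
          also have "\<dots> = convex hull ({a i, a i + d i} \<times> {axis i (1::real)})"
            by (rule convex_hull_Times[symmetric])
          finally show ?thesis .
        qed
        also have "\<dots> \<subseteq> convex hull (range f \<union> range g)"
          by (rule hull_mono) (auto simp: f_def g_def)
        finally show ?thesis .
      qed
      then show ?thesis by (auto simp: Q_def)
    qed
    have "convex hull Q = convex hull (range f \<union> range g)"
    proof
      show "convex hull Q \<subseteq> convex hull (range f \<union> range g)"
        using QC by (simp add: hull_minimal)
      show "convex hull (range f \<union> range g) \<subseteq> convex hull Q"
        using CQ by (rule hull_mono)
    qed
    then have sx: "(2 * int CARD('n) - 1) simplex (cayley P)"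
      unfolding simplex_def cay using nd card_C by (intro exI[of _ "range f \<union> range g"]) simp
    have seg: "\<forall>i. is_segment (P i)"
      using fm polyP
      unfolding is_segment_def fully_mixed_def
      by (simp add: Pd segment_convex_hull aff_dim_convex_hull dnz)
    show "fully_mixed P \<and> (2 * int CARD('n) - 1) simplex (cayley P)"
      using fm sx by blast
  qed
qed

end
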